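(* Suppose that $q\in(0,1)$ and $d\in\mathbb N$. Then for every symmetric positive semidefinite $A,B\in M_d(\mathbb R)$, $$\mathrm{trace}\big((A+B)^qA\big)\le\mathrm{trace}(A^{q+1})+\mathrm{trace}(B^qA).$$
   Context: Powers of positive semidefinite matrices are defined by functional calculus. *)

theory Defs
  imports "HOL-Analysis.Analysis"
begin

definition diag_mat :: "real^'n \<Rightarrow> real^'n^'n" where
  "diag_mat l = (\<chi> i j. if i = j then l $ i else 0)"

definition psd :: "real^'n^'n \<Rightarrow> bool" where
  "psd A \<longleftrightarrow> transpose A = A \<and> (\<forall>x. 0 \<le> x \<bullet> (A *v x))"

text \<open>The result is independent
  of the chosen diagonalisation.\<close>
definition mat_powr :: "real^'n^'n \<Rightarrow> real \<Rightarrow> real^'n^'n" where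
  "mat_powr A q =
     (let (U, l) = (SOME (U, l). orthogonal_matrix U \<and>
                        A = U ** diag_mat l ** transpose U)
      in U ** diag_mat (\<chi> i. l $ i powr q) ** transpose U)"

end

theory Submission
  imports Defs
begin


lemma quad_le_zero_imp:
  fixes a b :: real
  assumes "\<And>t. a * t + b * t^2 \<le> 0"
  shows "a = 0"
proof (rule ccontr)
  assume "a \<noteq> 0"
  define e where "e = \<bar>a\<bar> / (2 * (\<bar>b\<bar> + 1))"
  have e: "e > 0" using \<open>a \<noteq> 0\<close> by (simp add: e_def)
  have 1: "a * e + b * e^2 \<le> 0" "a * (-e) + b * (-e)^2 \<le> 0" using assms by blast+
  have "\<bar>a\<bar> * e \<le> - b * e^2"
  proof (cases "a \<ge> 0")
    case True then show ?thesis using 1(1) by simp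
  next
    case False then show ?thesis using 1(2) by simp
  qed
  also have "\<dots> \<le> \<bar>b\<bar> * e^2" by (intro mult_right_mono) auto
  finally have "\<bar>a\<bar> * e \<le> (\<bar>b\<bar> * e) * e" by (simp add: power2_eq_square)
  then have "\<bar>a\<bar> \<le> \<bar>b\<bar> * e" using e by simp
  moreover have "\<bar>b\<bar> * e < \<bar>a\<bar>"
  proof -
    have "\<bar>b\<bar> * e = \<bar>a\<bar> * (\<bar>b\<bar> / (2 * (\<bar>b\<bar> + 1)))" by (simp add: e_def)
    also have "\<dots> < \<bar>a\<bar> * 1" using \<open>a \<noteq> 0\<close> by (intro mult_strict_left_mono) auto
    finally show ?thesis by simp
  qed
  ultimately show False by simp
qed



lemma dot_mv_transpose: "(x::real^'n) \<bullet> (M *v y) = (transpose M *v x) \<bullet> y"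
proof -
  have "transpose M *v x = x v* M" using vector_transpose_matrix[of x "transpose M"] by simp
  then show ?thesis by (simp add: dot_lmul_matrix)
qed

lemma sym_dot: "transpose M = M \<Longrightarrow> (x::real^'n) \<bullet> (M *v y) = (M *v x) \<bullet> y"
  using dot_mv_transpose[of x M y] by simp

lemma eigvec_in_perp:
  fixes A :: "real^'n^'n" and S :: "(real^'n) set"
  assumes sym: "transpose A = A" and fin: "finite S" and card: "card S < CARD('n)"
    and eig: "\<And>v. v \<in> S \<Longrightarrow> \<exists>c. A *v v = c *\<^sub>R v"
  shows "\<exists>x. norm x = 1 \<and> (\<forall>v\<in>S. v \<bullet> x = 0) \<and> (\<exists>c. A *v x = c *\<^sub>R x)"
proof -
  define W where "W = {x::real^'n. \<forall>v\<in>S. v \<bullet> x = 0}"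
  have inv: "A *v x \<in> W" if "x \<in> W" for x
  proof -
    have "v \<bullet> (A *v x) = 0" if "v \<in> S" for v
    proof -
      obtain c where c: "A *v v = c *\<^sub>R v" using eig \<open>v \<in> S\<close> by blast
      have "v \<bullet> (A *v x) = (A *v v) \<bullet> x" using sym_dot[OF sym] by blast
      also have "\<dots> = c * (v \<bullet> x)" by (simp add: c)
      also have "\<dots> = 0" using \<open>x \<in> W\<close> \<open>v \<in> S\<close> by (simp add: W_def)
      finally show ?thesis .
    qed
    then show ?thesis by (simp add: W_def)
  qed
  have Wlin: "x + t *\<^sub>R y \<in> W" if "x \<in> W" "y \<in> W" for x y t
    using that by (simp add: W_def inner_add_right)
  define K where "K = sphere 0 1 \<inter> W"
  have "dim S \<le> card S" using fin by (rule dim_le_card')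
  then have "dim S < DIM(real^'n)" using card by simp
  then obtain z where z: "z \<noteq> 0" "\<And>y. y \<in> span S \<Longrightarrow> orthogonal z y"
    using orthogonal_to_subspace_exists by blast
  have "z /\<^sub>R norm z \<in> K" using z by (auto simp: K_def W_def orthogonal_def span_base inner_commute)
  then have Kne: "K \<noteq> {}" by blast
  have "closed W" unfolding W_def
    by (simp add: Collect_ball_eq closed_INT closed_hyperplane)
  then have "compact K" unfolding K_def by (simp add: compact_Int_closed)
  moreover have "continuous_on K (\<lambda>x. x \<bullet> (A *v x))"
    by (intro continuous_on_inner continuous_on_id matrix_vector_mult_linear_continuous_on)
  ultimately have "\<exists>x\<in>K. \<forall>y\<in>K. y \<bullet> (A *v y) \<le> x \<bullet> (A *v x)"
    using Kne by (intro continuous_attains_sup) auto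
  then obtain x0 where x0: "x0 \<in> K" and mx: "\<And>y. y \<in> K \<Longrightarrow> y \<bullet> (A *v y) \<le> x0 \<bullet> (A *v x0)"
    by blast
  define l where "l = x0 \<bullet> (A *v x0)"
  have x0n: "norm x0 = 1" "x0 \<in> W" using x0 by (auto simp: K_def)
  have bound: "y \<bullet> (A *v y) \<le> l * (y \<bullet> y)" if "y \<in> W" for y
  proof (cases "y = 0")
    case True then show ?thesis by simp
  next
    case False
    have "y /\<^sub>R norm y \<in> K" using that False
      by (auto simp: K_def W_def)
    then have "(y /\<^sub>R norm y) \<bullet> (A *v (y /\<^sub>R norm y)) \<le> l" using mx l_def by blast
    then have "(y \<bullet> (A *v y)) / (norm y)^2 \<le> l"
      by (simp add: matrix_vector_mult_scaleR power2_eq_square divide_simps)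
    then show ?thesis using False by (simp add: divide_le_eq dot_square_norm)
  qed
  define r where "r = A *v x0 - l *\<^sub>R x0"
  have rW: "r \<in> W" unfolding r_def using inv[OF x0n(2)] x0n(2) Wlin[of "A *v x0" x0 "-l"] by simp
  have "\<And>t. (2 * (r \<bullet> (A *v x0) - l * (r \<bullet> x0))) * t + (r \<bullet> (A *v r) - l * (r \<bullet> r)) * t^2 \<le> 0"
  proof -
    fix t
    have "(x0 + t *\<^sub>R r) \<bullet> (A *v (x0 + t *\<^sub>R r)) \<le> l * ((x0 + t *\<^sub>R r) \<bullet> (x0 + t *\<^sub>R r))"
      using bound Wlin[OF x0n(2) rW] by blast
    note ineq = this
    have x1: "x0 \<bullet> x0 = 1" using x0n by (simp add: dot_square_norm)
    have hx: "x0 \<bullet> (A *v r) = r \<bullet> (A *v x0)" using sym_dot[OF sym] by (metis inner_commute)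
    have hr: "x0 \<bullet> r = r \<bullet> x0" by (rule inner_commute)
    have e1: "(x0 + t *\<^sub>R r) \<bullet> (A *v (x0 + t *\<^sub>R r)) = l + 2*t*(r \<bullet> (A *v x0)) + t^2*(r \<bullet> (A *v r))"
      by (simp add: matrix_vector_right_distrib matrix_vector_mult_scaleR inner_add_left inner_add_right l_def power2_eq_square hx algebra_simps)
    have e2: "(x0 + t *\<^sub>R r) \<bullet> (x0 + t *\<^sub>R r) = 1 + 2*t*(r \<bullet> x0) + t^2*(r \<bullet> r)"
      by (simp add: inner_add_left inner_add_right power2_eq_square hr x1 algebra_simps)
    have h: "l + 2*t*(r \<bullet> (A *v x0)) + t^2*(r \<bullet> (A *v r)) \<le> l + 2*t*(l*(r \<bullet> x0)) + t^2*(l*(r \<bullet> r))"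
      using ineq unfolding e1 e2 by (simp add: algebra_simps)
    have g: "(2 * (r \<bullet> (A *v x0) - l * (r \<bullet> x0))) * t + (r \<bullet> (A *v r) - l * (r \<bullet> r)) * t^2
       = (2*t*(r \<bullet> (A *v x0)) + t^2*(r \<bullet> (A *v r))) - (2*t*(l*(r \<bullet> x0)) + t^2*(l*(r \<bullet> r)))"
      by (simp add: algebra_simps)
    show "(2 * (r \<bullet> (A *v x0) - l * (r \<bullet> x0))) * t + (r \<bullet> (A *v r) - l * (r \<bullet> r)) * t^2 \<le> 0"
      unfolding g using h by linarith
  qed
  then have "2 * (r \<bullet> (A *v x0) - l * (r \<bullet> x0)) = 0" by (rule quad_le_zero_imp)
  then have "r \<bullet> r = 0" by (simp add: r_def inner_diff_right algebra_simps)
  then have "A *v x0 = l *\<^sub>R x0" by (simp add: r_def)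
  then show ?thesis using x0n by (auto simp: W_def inner_commute)
qed



lemma eig_sets:
  fixes A :: "real^'n^'n"
  assumes sym: "transpose A = A"
  shows "k \<le> CARD('n) \<Longrightarrow> \<exists>S. finite S \<and> card S = k \<and> pairwise orthogonal S \<and>
              (\<forall>x\<in>S. norm x = 1 \<and> (\<exists>c. A *v x = c *\<^sub>R x))"
proof (induction k)
  case 0
  show ?case by (intro exI[of _ "{}"]) auto
next
  case (Suc k)
  then obtain S where S: "finite S" "card S = k" "pairwise orthogonal S"
    "\<forall>x\<in>S. norm x = 1 \<and> (\<exists>c. A *v x = c *\<^sub>R x)" by auto
  then obtain x where x: "norm x = 1" "\<forall>v\<in>S. v \<bullet> x = 0" "\<exists>c. A *v x = c *\<^sub>R x"
    using eigvec_in_perp[OF sym S(1)] Suc.prems by force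
  have "x \<notin> S"
  proof
    assume "x \<in> S"
    then have "x \<bullet> x = 0" using x(2) by blast
    then show False using x(1) by simp
  qed
  have "pairwise orthogonal (insert x S)"
    using S(3) x(2) by (auto simp: pairwise_insert orthogonal_def inner_commute)
  then show ?case using S x \<open>x \<notin> S\<close> by (intro exI[of _ "insert x S"]) auto
qed

lemma spectral:
  fixes A :: "real^'n^'n"
  assumes sym: "transpose A = A"
  shows "\<exists>U l. orthogonal_matrix U \<and> A = U ** diag_mat l ** transpose U"
proof -
  obtain S where S: "finite S" "card S = CARD('n)" "pairwise orthogonal S"
    "\<forall>x\<in>S. norm x = 1 \<and> (\<exists>c. A *v x = c *\<^sub>R x)"
    using eig_sets[OF sym, of "CARD('n)"] by auto
  obtain f where f: "bij_betw f (UNIV::'n set) S"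
    using S(1,2) by (metis finite_class.finite_UNIV finite_same_card_bij)
  have fS: "f i \<in> S" for i using f by (auto simp: bij_betw_def)
  have [simp]: "norm (f i) = 1" for i using fS S(4) by blast
  have [simp]: "i \<noteq> j \<Longrightarrow> orthogonal (f i) (f j)" for i j
    using S(3) f by (auto simp: pairwise_def bij_betw_def inj_on_def)
  define U where "U = (\<chi> i j. f j $ i)"
  define l where "l = (\<chi> j. SOME c. A *v f j = c *\<^sub>R f j)"
  have ev: "A *v f j = (l $ j) *\<^sub>R f j" for j
  proof -
    have "\<exists>c. A *v f j = c *\<^sub>R f j" using fS S(4) by blast
    then have "A *v f j = (SOME c. A *v f j = c *\<^sub>R f j) *\<^sub>R f j" by (rule someI_ex)
    then show ?thesis unfolding l_def by simp
  qed
  have col: "column j U = f j" for j by (simp add: U_def column_def)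
  have orth: "orthogonal_matrix U"
    by (simp add: orthogonal_matrix_orthonormal_columns col)
  have AU: "A ** U = U ** diag_mat l"
  proof -
    have "(A ** U) $ i $ j = (U ** diag_mat l) $ i $ j" for i j
    proof -
      have "(A ** U) $ i $ j = (A *v f j) $ i"
        by (simp add: matrix_matrix_mult_def matrix_vector_mult_def U_def)
      also have "\<dots> = l $ j * f j $ i" by (simp add: ev)
      also have "\<dots> = (U ** diag_mat l) $ i $ j"
        by (simp add: matrix_matrix_mult_def diag_mat_def U_def if_distrib cong: if_cong)
      finally show ?thesis .
    qed
    then show ?thesis by (simp add: vec_eq_iff)
  qed
  have "A = A ** (U ** transpose U)" using orth by (simp add: orthogonal_matrix_def)
  also have "\<dots> = U ** diag_mat l ** transpose U" by (metis matrix_mul_assoc AU)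
  finally show ?thesis using orth by blast
qed



definition fc :: "real^'n^'n \<Rightarrow> real^'n \<Rightarrow> (real \<Rightarrow> real) \<Rightarrow> real^'n^'n" where
  "fc U l f = U ** diag_mat (\<chi> i. f (l$i)) ** transpose U"

context fixes U :: "real^'n^'n" and l :: "real^'n" begin

lemma fc_entry: "fc U l f $ i $ j = (\<Sum>k\<in>UNIV. U$i$k * f (l$k) * U$j$k)"
  by (simp add: fc_def matrix_matrix_mult_def diag_mat_def transpose_def sum_distrib_right
      if_distrib cong: if_cong)

lemma fc_cong: "(\<And>i. f (l$i) = g (l$i)) \<Longrightarrow> fc U l f = fc U l g"
  by (simp add: fc_def)

lemma fc_transpose: "transpose (fc U l f) = fc U l f"
  by (simp add: vec_eq_iff transpose_def fc_entry mult.commute mult.left_commute)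

lemma diag_mat_mult: "diag_mat (a::real^'n) ** diag_mat b = diag_mat (\<chi> i. a$i * b$i)"
proof -
  have "(\<Sum>k\<in>UNIV. (if i = k then a$i else 0) * (if k = j then b$k else 0)) = (if i = j then a$i * b$i else 0)"
    for i j :: 'n
  proof -
    have "(\<lambda>k. (if i = k then a$i else 0) * (if k = j then b$k else 0)) = (\<lambda>k. if k = i then (if i = j then a$i*b$i else 0) else 0)"
      by auto
    then have "(\<Sum>k\<in>UNIV. (if i = k then a$i else 0) * (if k = j then b$k else 0)) = (\<Sum>k\<in>UNIV. if k = i then (if i = j then a$i*b$i else 0) else 0)"
      by (rule arg_cong)
    also have "\<dots> = (if i = j then a$i * b$i else 0)" by (simp add: sum.delta)
    finally show ?thesis .
  qed
  then show ?thesis by (simp add: vec_eq_iff matrix_matrix_mult_def diag_mat_def)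
qed

lemma fc_mult:
  assumes "orthogonal_matrix U"
  shows "fc U l f ** fc U l g = fc U l (\<lambda>t. f t * g t)"
proof -
  have tU: "transpose U ** U = mat 1" using assms by (simp add: orthogonal_matrix_def)
  have "fc U l f ** fc U l g = U ** diag_mat (\<chi> i. f (l$i)) ** (transpose U ** U) ** diag_mat (\<chi> i. g (l$i)) ** transpose U"
    by (simp add: fc_def matrix_mul_assoc)
  also have "\<dots> = U ** (diag_mat (\<chi> i. f (l$i)) ** diag_mat (\<chi> i. g (l$i))) ** transpose U"
    by (simp add: tU matrix_mul_assoc)
  also have "\<dots> = fc U l (\<lambda>t. f t * g t)" by (simp add: diag_mat_mult fc_def)
  finally show ?thesis .
qed

lemma fc_const:
  assumes "orthogonal_matrix U"
  shows "fc U l (\<lambda>t. c) = mat c"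
proof -
  have Ut: "U ** transpose U = mat 1" using assms by (simp add: orthogonal_matrix_def)
  have "diag_mat (\<chi> i. c) = (mat c :: real^'n^'n)" by (simp add: diag_mat_def mat_def vec_eq_iff)
  then have "fc U l (\<lambda>t. c) = U ** mat c ** transpose U" by (simp add: fc_def)
  also have "\<dots> = c *\<^sub>R (U ** transpose U)"
    by (simp add: vec_eq_iff matrix_matrix_mult_def mat_def if_distrib sum_distrib_left mult.commute mult.left_commute cong: if_cong)
  also have "\<dots> = mat c" by (simp add: Ut vec_eq_iff mat_def)
  finally show ?thesis .
qed

lemma fc_add: "fc U l (\<lambda>t. f t + g t) = fc U l f + fc U l g"
  by (simp add: vec_eq_iff fc_entry algebra_simps sum.distrib)

lemma fc_mv: "fc U l f *v y = (\<Sum>k\<in>UNIV. (f (l$k) * (column k U \<bullet> y)) *\<^sub>R column k U)"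
proof -
  have "(fc U l f *v y) $ i = (\<Sum>k\<in>UNIV. (f (l$k) * (column k U \<bullet> y)) *\<^sub>R column k U) $ i" for i
  proof -
    have "(fc U l f *v y) $ i = (\<Sum>j\<in>UNIV. \<Sum>k\<in>UNIV. U$i$k * f (l$k) * U$j$k * y$j)"
      by (simp add: matrix_vector_mult_def fc_entry sum_distrib_right)
    also have "\<dots> = (\<Sum>k\<in>UNIV. \<Sum>j\<in>UNIV. U$i$k * f (l$k) * U$j$k * y$j)"
      by (rule sum.swap)
    also have "\<dots> = (\<Sum>k\<in>UNIV. (f (l$k) * (column k U \<bullet> y)) *\<^sub>R column k U) $ i"
      by (simp add: sum_component column_def inner_vec_def sum_distrib_left sum_distrib_right mult.commute mult.left_commute)
    finally show ?thesis .
  qed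
  then show ?thesis by (simp add: vec_eq_iff)
qed

end



context fixes U :: "real^'n^'n" and l :: "real^'n" begin

lemma fc_trace: "trace (fc U l f ** M) = (\<Sum>k\<in>UNIV. f (l$k) * (column k U \<bullet> (M *v column k U)))"
proof -
  have "trace (fc U l f ** M) = (\<Sum>i\<in>UNIV. \<Sum>j\<in>UNIV. \<Sum>k\<in>UNIV. U$i$k * f (l$k) * U$j$k * M$j$i)"
    by (simp add: trace_def matrix_matrix_mult_def fc_entry sum_distrib_right)
  also have "\<dots> = (\<Sum>i\<in>UNIV. \<Sum>k\<in>UNIV. \<Sum>j\<in>UNIV. U$i$k * f (l$k) * U$j$k * M$j$i)"
    by (intro sum.cong refl sum.swap)
  also have "\<dots> = (\<Sum>k\<in>UNIV. \<Sum>i\<in>UNIV. \<Sum>j\<in>UNIV. U$i$k * f (l$k) * U$j$k * M$j$i)"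
    by (rule sum.swap)
  also have "\<dots> = (\<Sum>k\<in>UNIV. \<Sum>j\<in>UNIV. \<Sum>i\<in>UNIV. U$i$k * f (l$k) * U$j$k * M$j$i)"
    by (intro sum.cong refl sum.swap)
  also have "\<dots> = (\<Sum>k\<in>UNIV. f (l$k) * (column k U \<bullet> (M *v column k U)))"
    by (simp add: column_def inner_vec_def matrix_vector_mult_def sum_distrib_left sum_distrib_right
        mult.commute mult.left_commute)
  finally show ?thesis .
qed

lemma fc_quad: "y \<bullet> (fc U l f *v y) = (\<Sum>k\<in>UNIV. f (l$k) * (column k U \<bullet> y)^2)"
  by (simp add: fc_mv inner_sum_right power2_eq_square inner_commute mult.assoc)

lemma col_orth:
  assumes "orthogonal_matrix U"
  shows "column j U \<bullet> column k U = (if j = k then 1 else 0)"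
  using assms unfolding orthogonal_matrix_orthonormal_columns
  by (auto simp: orthogonal_def norm_eq_1)

lemma sumsq:
  assumes "orthogonal_matrix U"
  shows "(\<Sum>k\<in>UNIV. (column k U \<bullet> y)^2) = y \<bullet> y"
  using fc_quad[of y "\<lambda>t. 1"] fc_const[OF assms, of l 1] by simp

lemma psd_eig_nonneg:
  assumes "orthogonal_matrix U" "psd (fc U l (\<lambda>t. t))"
  shows "0 \<le> l$k"
proof -
  have "0 \<le> column k U \<bullet> (fc U l (\<lambda>t. t) *v column k U)" using assms(2) by (simp add: psd_def)
  also have "\<dots> = (\<Sum>j\<in>UNIV. l$j * (column j U \<bullet> column k U)^2)" by (simp add: fc_quad)
  also have "\<dots> = (\<Sum>j\<in>UNIV. if j = k then l$k else 0)"
    by (intro sum.cong refl) (simp add: col_orth[OF assms(1)])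
  also have "\<dots> = l$k" by simp
  finally show ?thesis .
qed

end

lemma mat_powr_fc:
  fixes A :: "real^'n^'n"
  assumes "psd A"
  shows "\<exists>U l. orthogonal_matrix U \<and> A = fc U l (\<lambda>t. t) \<and> (\<forall>i. 0 \<le> l$i) \<and>
           (\<forall>q. mat_powr A q = fc U l (\<lambda>t. t powr q))"
proof -
  define P where "P = (\<lambda>(U::real^'n^'n, l::real^'n). orthogonal_matrix U \<and> A = U ** diag_mat l ** transpose U)"
  have "\<exists>p. P p" using spectral[of A] assms by (auto simp: psd_def P_def)
  then have pP: "P (SOME p. P p)" by (rule someI_ex)
  define U where "U = fst (SOME p. P p)"
  define l where "l = snd (SOME p. P p)"
  have sp: "(SOME p. P p) = (U, l)" by (simp add: U_def l_def)
  have 1: "orthogonal_matrix U" "A = U ** diag_mat l ** transpose U" using pP sp by (auto simp: P_def)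
  have eta: "(\<chi> i. l$i) = l" by (simp add: vec_eq_iff)
  have 2: "A = fc U l (\<lambda>t. t)" using 1 by (simp add: fc_def eta)
  have 3: "mat_powr A q = fc U l (\<lambda>t. t powr q)" for q
    unfolding mat_powr_def P_def[symmetric] sp by (simp add: fc_def)
  have 4: "0 \<le> l$i" for i using psd_eig_nonneg[OF 1(1)] 2 assms by metis
  show ?thesis using 1 2 3 4 by blast
qed



lemma matrix_sub_ldistrib: "(X::real^'n^'n) ** (Y - Z) = X ** Y - X ** Z"
  by (simp add: vec_eq_iff matrix_matrix_mult_def sum_subtractf right_diff_distrib)

lemma matrix_sub_rdistrib: "((Y::real^'n^'n) - Z) ** X = Y ** X - Z ** X"
  by (simp add: vec_eq_iff matrix_matrix_mult_def sum_subtractf left_diff_distrib)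

lemma trace_sandwich:
  "trace (transpose (P::real^'n^'n) ** R ** P) = (\<Sum>i\<in>UNIV. column i P \<bullet> (R *v column i P))"
  apply (simp add: trace_def matrix_matrix_mult_def transpose_def column_def inner_vec_def
      matrix_vector_mult_def sum_distrib_left sum_distrib_right mult.commute mult.left_commute)
  apply (rule sum.cong[OF refl])
  apply (subst sum.swap)
  apply (simp add: mult.commute mult.left_commute)
  done

context
  fixes U :: "real^'n^'n" and l :: "real^'n" and s :: real
  assumes oU: "orthogonal_matrix U" and lnn: "\<And>i. 0 \<le> l$i" and sp: "0 < s"
begin

lemma fc_plus_s: "fc U l (\<lambda>t. t) + mat s = fc U l (\<lambda>t. t + s)"
  using fc_add[of U l "\<lambda>t. t" "\<lambda>t. s"] fc_const[OF oU, of l s] by simp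

lemma nz: "l$i + s \<noteq> 0"
  using lnn[of i] sp by linarith

lemma fc_inv1: "fc U l (\<lambda>t. 1/(t+s)) ** (fc U l (\<lambda>t. t) + mat s) = mat 1"
proof -
  have "fc U l (\<lambda>t. 1/(t+s)) ** (fc U l (\<lambda>t. t) + mat s) = fc U l (\<lambda>t. 1/(t+s) * (t+s))"
    by (simp add: fc_plus_s fc_mult[OF oU])
  also have "\<dots> = fc U l (\<lambda>t. 1)"
    by (rule fc_cong) (simp add: nz)
  also have "\<dots> = mat 1" by (rule fc_const[OF oU])
  finally show ?thesis .
qed

lemma fc_inv2: "(fc U l (\<lambda>t. t) + mat s) ** fc U l (\<lambda>t. 1/(t+s)) = mat 1"
proof -
  have "(fc U l (\<lambda>t. t) + mat s) ** fc U l (\<lambda>t. 1/(t+s)) = fc U l (\<lambda>t. (t+s) * (1/(t+s)))"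
    by (simp add: fc_plus_s fc_mult[OF oU])
  also have "\<dots> = fc U l (\<lambda>t. 1)"
    by (rule fc_cong) (simp add: nz)
  also have "\<dots> = mat 1" by (rule fc_const[OF oU])
  finally show ?thesis .
qed

lemma fc_h_trace:
  "trace (fc U l (\<lambda>t. t/(t+s)) ** M) = trace M - s * trace (fc U l (\<lambda>t. 1/(t+s)) ** M)"
proof -
  have e: "l$k/(l$k+s) = 1 - s * (1/(l$k+s))" for k
  proof -
    have "l$k + s > 0" using lnn[of k] sp by linarith
    then show ?thesis by (simp add: field_simps)
  qed
  have "trace M = trace (fc U l (\<lambda>t. 1) ** M)" by (simp add: fc_const[OF oU])
  then show ?thesis
    by (simp add: fc_trace e left_diff_distrib sum_subtractf sum_distrib_left mult.assoc)
qed

lemma fc_g_id_trace: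
  "trace ((fc U l (\<lambda>t. 1/(t+s)) ** fc U l (\<lambda>t. t)) ** M) = trace M - s * trace (fc U l (\<lambda>t. 1/(t+s)) ** M)"
proof -
  have "fc U l (\<lambda>t. 1/(t+s)) ** fc U l (\<lambda>t. t) = fc U l (\<lambda>t. t/(t+s))"
    by (simp add: fc_mult[OF oU])
  then show ?thesis by (simp add: fc_h_trace)
qed

lemma fc_g_quad: "s * (y \<bullet> (fc U l (\<lambda>t. 1/(t+s)) *v y)) \<le> y \<bullet> y"
proof -
  have "s * (y \<bullet> (fc U l (\<lambda>t. 1/(t+s)) *v y)) = (\<Sum>k\<in>UNIV. (s/(l$k+s)) * (column k U \<bullet> y)^2)"
    by (simp add: fc_quad sum_distrib_left)
  also have "\<dots> \<le> (\<Sum>k\<in>UNIV. 1 * (column k U \<bullet> y)^2)"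
  proof (intro sum_mono mult_right_mono)
    fix k
    show "s/(l$k+s) \<le> 1" using lnn[of k] sp by simp
  qed simp
  also have "\<dots> = y \<bullet> y" using sumsq[OF oU] by simp
  finally show ?thesis .
qed

lemma fc_g_sym: "transpose (fc U l (\<lambda>t. 1/(t+s))) = fc U l (\<lambda>t. 1/(t+s))"
  by (rule fc_transpose)

lemma fc_g_nonneg: "0 \<le> 1/(l$k+s)"
  using lnn[of k] sp by simp

end



lemma per_s:
  fixes A B UA UB UC :: "real^'n^'n" and a b c :: "real^'n" and s :: real
  assumes oA: "orthogonal_matrix UA" and oB: "orthogonal_matrix UB" and oC: "orthogonal_matrix UC"
    and hA: "A = fc UA a (\<lambda>t. t)" and hB: "B = fc UB b (\<lambda>t. t)" and hC: "A + B = fc UC c (\<lambda>t. t)"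
    and an: "\<And>i. 0 \<le> a$i" and bn: "\<And>i. 0 \<le> b$i" and cn: "\<And>i. 0 \<le> c$i"
    and pA: "psd A" and pB: "psd B" and sp: "0 < s"
  shows "trace (fc UC c (\<lambda>t. t/(t+s)) ** A)
           \<le> trace (fc UA a (\<lambda>t. t/(t+s)) ** A) + trace (fc UB b (\<lambda>t. t/(t+s)) ** A)"
proof -
  define RA where "RA = fc UA a (\<lambda>t. 1/(t+s))"
  define RB where "RB = fc UB b (\<lambda>t. 1/(t+s))"
  define RC where "RC = fc UC c (\<lambda>t. 1/(t+s))"
  have symA: "transpose A = A" using pA by (simp add: psd_def)
  have iA2: "(A + mat s) ** RA = mat 1" using fc_inv2[OF oA an sp] hA RA_def by simp
  have iB1: "RB ** (B + mat s) = mat 1" using fc_inv1[OF oB bn sp] hB RB_def by simp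
  have iC1: "RC ** (A + B + mat s) = mat 1" using fc_inv1[OF oC cn sp] hC RC_def by simp
  have iC2: "(A + B + mat s) ** RC = mat 1" using fc_inv2[OF oC cn sp] hC RC_def by simp
  have tA: "trace (fc UA a (\<lambda>t. t/(t+s)) ** A) = trace A - s * trace (RA ** A)"
    using fc_h_trace[OF oA an sp] RA_def by simp
  have tB: "trace (fc UB b (\<lambda>t. t/(t+s)) ** A) = trace A - s * trace (RB ** A)"
    using fc_h_trace[OF oB bn sp] RB_def by simp
  have tC: "trace (fc UC c (\<lambda>t. t/(t+s)) ** A) = trace A - s * trace (RC ** A)"
    using fc_h_trace[OF oC cn sp] RC_def by simp
  have gA: "trace ((RA ** A) ** A) = trace A - s * trace (RA ** A)"
    using fc_g_id_trace[OF oA an sp] RA_def hA by simp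
  have diff: "RB - RC = RB ** A ** RC"
  proof -
    have eq: "(A + B + mat s) - (B + mat s) = A" by simp
    have "RB ** A ** RC = RB ** ((A + B + mat s) - (B + mat s)) ** RC" by (simp only: eq)
    also have "\<dots> = RB ** ((A + B + mat s) ** RC) - (RB ** (B + mat s)) ** RC"
      by (simp only: matrix_sub_ldistrib matrix_sub_rdistrib matrix_mul_assoc)
    also have "\<dots> = RB - RC" by (simp add: iC2 iB1)
    finally show ?thesis by simp
  qed
  have d2: "trace (RB ** A) - trace (RC ** A) = trace (RC ** (A ** RB ** A))"
  proof -
    have "trace (RB ** A) - trace (RC ** A) = trace ((RB - RC) ** A)"
      by (simp add: matrix_sub_rdistrib trace_sub)
    also have "\<dots> = trace ((RB ** A) ** (RC ** A))" by (simp add: diff matrix_mul_assoc)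
    also have "\<dots> = trace ((RC ** A) ** (RB ** A))" by (rule trace_mul_sym)
    also have "\<dots> = trace (RC ** (A ** RB ** A))" by (simp add: matrix_mul_assoc)
    finally show ?thesis .
  qed
  have d4: "s * trace (RC ** (A ** RB ** A)) \<le> trace (RC ** (A ** A))"
  proof -
    have "s * trace (RC ** (A ** RB ** A))
        = (\<Sum>k\<in>UNIV. 1/(c$k+s) * (s * (column k UC \<bullet> ((A ** RB ** A) *v column k UC))))"
      by (simp add: RC_def fc_trace sum_distrib_left mult.commute mult.left_commute)
    also have "\<dots> \<le> (\<Sum>k\<in>UNIV. 1/(c$k+s) * (column k UC \<bullet> ((A ** A) *v column k UC)))"
    proof (intro sum_mono mult_left_mono)
      fix k
      define w where "w = column k UC"
      have "w \<bullet> ((A ** RB ** A) *v w) = (A *v w) \<bullet> (RB *v (A *v w))"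
        by (simp add: matrix_vector_mul_assoc[symmetric] sym_dot[OF symA])
      moreover have "s * ((A *v w) \<bullet> (RB *v (A *v w))) \<le> (A *v w) \<bullet> (A *v w)"
        unfolding RB_def by (rule fc_g_quad[OF oB bn sp])
      moreover have "(A *v w) \<bullet> (A *v w) = w \<bullet> ((A ** A) *v w)"
        by (simp add: matrix_vector_mul_assoc[symmetric] sym_dot[OF symA])
      ultimately show "s * (column k UC \<bullet> ((A ** RB ** A) *v column k UC)) \<le> column k UC \<bullet> ((A ** A) *v column k UC)"
        unfolding w_def by simp
      show "0 \<le> 1/(c$k+s)" using cn[of k] sp by simp
    qed
    also have "\<dots> = trace (RC ** (A ** A))" by (simp add: RC_def fc_trace)
    finally show ?thesis .
  qed
  have vii: "x \<bullet> (RC *v x) \<le> x \<bullet> (RA *v x)" for x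
  proof -
    define y where "y = RC *v x"
    define z where "z = RA *v x"
    have Qy: "(A + B + mat s) *v y = x" by (simp add: y_def matrix_vector_mul_assoc iC2)
    have Pz: "(A + mat s) *v z = x" by (simp add: z_def matrix_vector_mul_assoc iA2)
    have ms: "mat s *v v = s *\<^sub>R v" for v :: "real^'n"
    proof -
      have "(\<Sum>j\<in>UNIV. (if i = j then s else 0) * v$j) = s * v$i" for i
      proof -
        have "(\<lambda>j. (if i = j then s else 0) * v$j) = (\<lambda>j. if j = i then s * v$i else 0)" by auto
        then have "(\<Sum>j\<in>UNIV. (if i = j then s else 0) * v$j) = (\<Sum>j\<in>UNIV. if j = i then s * v$i else 0)"
          by (rule arg_cong)
        also have "\<dots> = s * v$i" by (simp add: sum.delta)
        finally show ?thesis .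
      qed
      then show ?thesis by (simp add: vec_eq_iff matrix_vector_mult_def mat_def)
    qed
    have By: "0 \<le> y \<bullet> (B *v y)" using pB by (simp add: psd_def)
    have Az: "0 \<le> (y - z) \<bullet> (A *v (y - z))" using pA by (simp add: psd_def)
    have e1: "x \<bullet> y = y \<bullet> (A *v y) + y \<bullet> (B *v y) + s * (y \<bullet> y)"
      using Qy by (metis inner_commute inner_add_right inner_scaleR_right matrix_vector_mult_add_rdistrib ms)
    have e2: "x = A *v z + s *\<^sub>R z" using Pz by (simp add: matrix_vector_mult_add_rdistrib ms)
    have sAz: "y \<bullet> (A *v z) = z \<bullet> (A *v y)" using sym_dot[OF symA, of y z] by (simp add: inner_commute)
    have e3: "(y - z) \<bullet> (A *v (y - z)) = y \<bullet> (A *v y) - 2 * (y \<bullet> (A *v z)) + z \<bullet> (A *v z)"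
      by (simp add: matrix_vector_mult_diff_distrib inner_diff_left inner_diff_right sAz inner_commute)
    have e4': "x \<bullet> z = (A *v z) \<bullet> z + s * (z \<bullet> z)" unfolding e2 by (simp add: inner_add_left)
    have e4: "x \<bullet> z = z \<bullet> (A *v z) + s * (z \<bullet> z)" using e4' by (simp add: inner_commute)
    have e5': "x \<bullet> y = (A *v z) \<bullet> y + s * (z \<bullet> y)" unfolding e2 by (simp add: inner_add_left)
    have e5: "x \<bullet> y = y \<bullet> (A *v z) + s * (y \<bullet> z)" using e5' by (simp add: inner_commute)
    have yz: "0 \<le> (y - z) \<bullet> (y - z)" by simp
    have e6: "(y - z) \<bullet> (y - z) = y \<bullet> y - 2 * (y \<bullet> z) + z \<bullet> z"
      by (simp add: inner_diff_left inner_diff_right inner_commute)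
    have "s * ((y - z) \<bullet> (y - z)) \<ge> 0" using sp yz by simp
    then have "x \<bullet> y \<le> x \<bullet> z" using e1 e3 e4 e5 e6 By Az by (simp add: algebra_simps)
    then show ?thesis by (simp add: y_def z_def)
  qed
  have d5: "trace (RC ** (A ** A)) \<le> trace (RA ** (A ** A))"
  proof -
    have tr: "trace (R ** (A ** A)) = (\<Sum>i\<in>UNIV. column i A \<bullet> (R *v column i A))" for R
    proof -
      have "trace (R ** (A ** A)) = trace ((R ** A) ** A)" by (simp add: matrix_mul_assoc)
      also have "\<dots> = trace (A ** (R ** A))" by (rule trace_mul_sym)
      also have "\<dots> = trace (transpose A ** R ** A)" by (simp add: symA matrix_mul_assoc)
      also have "\<dots> = (\<Sum>i\<in>UNIV. column i A \<bullet> (R *v column i A))" by (rule trace_sandwich)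
      finally show ?thesis .
    qed
    show ?thesis unfolding tr by (intro sum_mono vii)
  qed
  have "s * (trace (RB ** A) - trace (RC ** A)) \<le> trace ((RA ** A) ** A)"
    using d2 d4 d5 by (simp add: matrix_mul_assoc)
  then show ?thesis using tA tB tC gA by (simp add: algebra_simps)
qed



definition KK :: "real \<Rightarrow> ennreal" where
  "KK q = (\<integral>\<^sup>+ u. ennreal (indicator {0<..} u * u powr (q-1) / (1+u)) \<partial>lborel)"

lemma int_scale:
  fixes q t :: real
  assumes "0 \<le> t"
  shows "(\<integral>\<^sup>+ s. ennreal (indicator {0<..} s * s powr (q-1) * (t/(t+s))) \<partial>lborel) = KK q * ennreal (t powr q)"
proof (cases "t = 0")
  case True then show ?thesis by simp
next
  case False
  then have tp: "t > 0" using assms by simp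
  have meas: "(\<lambda>s. ennreal (indicator {0<..} s * s powr (q-1) * (t/(t+s)))) \<in> borel_measurable borel"
    by measurable
  have "(\<integral>\<^sup>+ s. ennreal (indicator {0<..} s * s powr (q-1) * (t/(t+s))) \<partial>lborel)
      = \<bar>t\<bar> * (\<integral>\<^sup>+ u. ennreal (indicator {0<..} (0 + t*u) * (0 + t*u) powr (q-1) * (t/(t+(0 + t*u)))) \<partial>lborel)"
    by (rule nn_integral_real_affine[OF meas]) (use tp in simp)
  also have "(\<lambda>u. ennreal (indicator {0<..} (0 + t*u) * (0 + t*u) powr (q-1) * (t/(t+(0 + t*u)))))
      = (\<lambda>u. ennreal (t powr (q-1)) * ennreal (indicator {0<..} u * u powr (q-1) / (1+u)))"
  proof
    fix u :: real
    show "ennreal (indicator {0<..} (0 + t*u) * (0 + t*u) powr (q-1) * (t/(t+(0 + t*u))))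
        = ennreal (t powr (q-1)) * ennreal (indicator {0<..} u * u powr (q-1) / (1+u))"
    proof (cases "u > 0")
      case True
      have "t + t*u > 0" using tp True by (simp add: add_pos_pos)
      then have "t / (t + t*u) = 1/(1+u)" using tp True by (simp add: field_simps)
      then have "indicator {0<..} (0 + t*u) * (0 + t*u) powr (q-1) * (t/(t+(0 + t*u)))
          = t powr (q-1) * (indicator {0<..} u * u powr (q-1) / (1+u))"
        using tp True by (simp add: powr_mult indicator_def)
      then show ?thesis by (simp only: ennreal_mult'[symmetric] powr_ge_zero)
    next
      case False
      then have "\<not> 0 < t*u" using tp by (simp add: zero_less_mult_iff)
      then show ?thesis using False by (simp add: indicator_def)
    qed
  qed
  also have "(\<integral>\<^sup>+ u. ennreal (t powr (q-1)) * ennreal (indicator {0<..} u * u powr (q-1) / (1+u)) \<partial>lborel)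
      = ennreal (t powr (q-1)) * KK q"
    unfolding KK_def by (rule nn_integral_cmult) measurable
  finally have "(\<integral>\<^sup>+ s. ennreal (indicator {0<..} s * s powr (q-1) * (t/(t+s))) \<partial>lborel)
      = ennreal t * ennreal (t powr (q-1)) * KK q" using tp by (simp add: mult.assoc)
  also have "ennreal t * ennreal (t powr (q-1)) = ennreal (t powr q)"
  proof -
    have "t powr q = t powr (1 + (q-1))" by simp
    also have "\<dots> = t powr 1 * t powr (q-1)" by (rule powr_add)
    also have "\<dots> = t * t powr (q-1)" using tp by (simp add: powr_one)
    finally have "t * t powr (q-1) = t powr q" by simp
    then show ?thesis using tp by (simp add: ennreal_mult[symmetric])
  qed
  finally show ?thesis by (simp add: mult.commute)
qed



lemma KK_fin:
  assumes q0: "0 < q" and q1: "q < 1"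
  shows "KK q < \<infinity>"
proof -
  define f1 where "f1 = (\<lambda>x::real. if x \<in> {0..1} then x powr (q-1) else 0)"
  define f2 where "f2 = (\<lambda>x::real. if x \<in> {1..} then x powr (q-2) else 0)"
  have h1: "(f1 has_integral (1 powr (q - 1 + 1) / (q - 1 + 1))) UNIV"
    unfolding f1_def has_integral_restrict_UNIV using q0 by (intro has_integral_powr_from_0) auto
  have h2: "(f2 has_integral (-(1 powr (q - 2 + 1)) / (q - 2 + 1))) UNIV"
    unfolding f2_def has_integral_restrict_UNIV using q1 by (intro has_integral_powr_to_inf) auto
  have m1: "f1 \<in> borel_measurable borel" unfolding f1_def by measurable
  have m2: "f2 \<in> borel_measurable borel" unfolding f2_def by measurable
  have i1: "integral\<^sup>N lborel f1 = (1 powr (q - 1 + 1) / (q - 1 + 1))"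
    by (rule nn_integral_has_integral_lborel[OF m1 _ h1]) (simp add: f1_def)
  have i2: "integral\<^sup>N lborel f2 = (-(1 powr (q - 2 + 1)) / (q - 2 + 1))"
    by (rule nn_integral_has_integral_lborel[OF m2 _ h2]) (simp add: f2_def)
  have "KK q \<le> (\<integral>\<^sup>+ u. ennreal (f1 u) + ennreal (f2 u) \<partial>lborel)"
    unfolding KK_def
  proof (intro nn_integral_mono)
    fix u :: real
    show "ennreal (indicator {0<..} u * u powr (q-1) / (1+u)) \<le> ennreal (f1 u) + ennreal (f2 u)"
    proof (cases "u > 0")
      case False then show ?thesis by (simp add: indicator_def)
    next
      case True
      show ?thesis
      proof (cases "u \<le> 1")
        case True
        have "u powr (q-1) / (1+u) \<le> u powr (q-1)" using \<open>u > 0\<close>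
          by (simp add: divide_le_eq)
        then have "ennreal (indicator {0<..} u * u powr (q-1) / (1+u)) \<le> ennreal (f1 u)"
          using \<open>u > 0\<close> True by (simp add: f1_def indicator_def)
        then show ?thesis by (simp add: add_increasing2)
      next
        case False
        have "u powr (q-1) / (1+u) \<le> u powr (q-1) / u" using \<open>u > 0\<close>
          by (intro divide_left_mono) auto
        also have "\<dots> = u powr (q-2)"
        proof -
          have "u powr (q-2) = u powr ((q-1) - 1)" by simp
          also have "\<dots> = u powr (q-1) / u powr 1" by (rule powr_diff)
          finally show ?thesis using \<open>u > 0\<close> by (simp add: powr_one)
        qed
        finally have "ennreal (indicator {0<..} u * u powr (q-1) / (1+u)) \<le> ennreal (f2 u)"
          using \<open>u > 0\<close> False by (simp add: f2_def indicator_def)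
        then show ?thesis by (simp add: add_increasing)
      qed
    qed
  qed
  also have "\<dots> = integral\<^sup>N lborel f1 + integral\<^sup>N lborel f2"
    by (rule nn_integral_add) (use m1 m2 in auto)
  also have "\<dots> < \<infinity>" by (simp add: i1 i2)
  finally show ?thesis .
qed

lemma KK_pos:
  assumes q0: "0 < q" and q1: "q < 1"
  shows "KK q \<noteq> 0"
proof -
  have "(\<integral>\<^sup>+ u. ennreal (1/6) * indicator {1..2::real} u \<partial>lborel) \<le> KK q"
    unfolding KK_def
  proof (intro nn_integral_mono)
    fix u :: real
    show "ennreal (1/6) * indicator {1..2::real} u \<le> ennreal (indicator {0<..} u * u powr (q-1) / (1+u))"
    proof (cases "u \<in> {1..2}")
      case False then show ?thesis by simp
    next
      case True
      then have u: "1 \<le> u" "u \<le> 2" by auto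
      have "1/2 \<le> 1/u" using u by (simp add: field_simps)
      also have "1/u = u powr (-1)" using u by (simp add: powr_neg_one)
      also have "\<dots> \<le> u powr (q-1)" using u q0 by (intro powr_mono) auto
      finally have a: "1/2 \<le> u powr (q-1)" .
      have "(1/6::real) = (1/2) / 3" by simp
      also have "\<dots> \<le> u powr (q-1) / (1+u)"
        using a u by (intro frac_le) auto
      finally have "1/6 \<le> indicator {0<..} u * u powr (q-1) / (1+u)" using u by (simp add: indicator_def)
      then show ?thesis using True by simp
    qed
  qed
  moreover have "(\<integral>\<^sup>+ u. ennreal (1/6) * indicator {1..2::real} u \<partial>lborel) = ennreal (1/6)"
    by (subst nn_integral_cmult_indicator) auto
  ultimately show ?thesis by auto
qed



lemma int_sum:
  fixes x g :: "'n::finite \<Rightarrow> real"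
  assumes xn: "\<And>k. 0 \<le> x k" and gn: "\<And>k. 0 \<le> g k"
  shows "(\<integral>\<^sup>+ s. ennreal (indicator {0<..} s * s powr (q-1) * (\<Sum>k\<in>UNIV. x k/(x k+s) * g k)) \<partial>lborel)
       = KK q * ennreal (\<Sum>k\<in>UNIV. x k powr q * g k)"
proof -
  have pw: "ennreal (indicator {0<..} s * s powr (q-1) * (\<Sum>k\<in>UNIV. x k/(x k+s) * g k))
      = (\<Sum>k\<in>UNIV. ennreal (g k) * ennreal (indicator {0<..} s * s powr (q-1) * (x k/(x k+s))))" for s
  proof (cases "s > 0")
    case False then show ?thesis by (simp add: indicator_def)
  next
    case True
    have nn: "0 \<le> indicator {0<..} s * s powr (q-1) * (x k/(x k+s))" for k
      using True xn[of k] by (simp add: indicator_def)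
    have "indicator {0<..} s * s powr (q-1) * (\<Sum>k\<in>UNIV. x k/(x k+s) * g k)
        = (\<Sum>k\<in>UNIV. g k * (indicator {0<..} s * s powr (q-1) * (x k/(x k+s))))"
      unfolding sum_distrib_left by (intro sum.cong refl) simp
    then have "ennreal (indicator {0<..} s * s powr (q-1) * (\<Sum>k\<in>UNIV. x k/(x k+s) * g k))
        = ennreal (\<Sum>k\<in>UNIV. g k * (indicator {0<..} s * s powr (q-1) * (x k/(x k+s))))"
      by simp
    also have "\<dots> = (\<Sum>k\<in>UNIV. ennreal (g k * (indicator {0<..} s * s powr (q-1) * (x k/(x k+s)))))"
      by (intro sum_ennreal[symmetric] mult_nonneg_nonneg gn nn)
    also have "\<dots> = (\<Sum>k\<in>UNIV. ennreal (g k) * ennreal (indicator {0<..} s * s powr (q-1) * (x k/(x k+s))))"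
      by (intro sum.cong refl ennreal_mult' gn)
    finally show ?thesis .
  qed
  have "(\<integral>\<^sup>+ s. ennreal (indicator {0<..} s * s powr (q-1) * (\<Sum>k\<in>UNIV. x k/(x k+s) * g k)) \<partial>lborel)
      = (\<Sum>k\<in>UNIV. \<integral>\<^sup>+ s. ennreal (g k) * ennreal (indicator {0<..} s * s powr (q-1) * (x k/(x k+s))) \<partial>lborel)"
    unfolding pw by (rule nn_integral_sum) measurable
  also have "\<dots> = (\<Sum>k\<in>UNIV. ennreal (g k) * (KK q * ennreal (x k powr q)))"
  proof (intro sum.cong refl)
    fix k
    have "(\<integral>\<^sup>+ s. ennreal (g k) * ennreal (indicator {0<..} s * s powr (q-1) * (x k/(x k+s))) \<partial>lborel)
        = ennreal (g k) * (\<integral>\<^sup>+ s. ennreal (indicator {0<..} s * s powr (q-1) * (x k/(x k+s))) \<partial>lborel)"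
      by (rule nn_integral_cmult) measurable
    also have "\<dots> = ennreal (g k) * (KK q * ennreal (x k powr q))" using int_scale[OF xn[of k]] by simp
    finally show "(\<integral>\<^sup>+ s. ennreal (g k) * ennreal (indicator {0<..} s * s powr (q-1) * (x k/(x k+s))) \<partial>lborel)
        = ennreal (g k) * (KK q * ennreal (x k powr q))" .
  qed
  also have "\<dots> = KK q * (\<Sum>k\<in>UNIV. ennreal (x k powr q * g k))"
    unfolding sum_distrib_left
    by (intro sum.cong refl) (simp add: ennreal_mult'[OF gn] mult.commute mult.left_commute)
  also have "\<dots> = KK q * ennreal (\<Sum>k\<in>UNIV. x k powr q * g k)"
    using gn by (subst sum_ennreal) auto
  finally show ?thesis .
qed

lemma transpose_add': "transpose ((A::real^'n^'n) + B) = transpose A + transpose B"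
  by (simp add: vec_eq_iff transpose_def)

lemma psd_add: "psd A \<Longrightarrow> psd B \<Longrightarrow> psd (A + B)"
  unfolding psd_def transpose_add' by (simp add: matrix_vector_mult_add_rdistrib inner_add_right add_nonneg_nonneg)

theorem mainTheorem19:
  fixes A B :: "real^'d^'d" and q :: real
  assumes "0 < q" and "q < 1"
    and "psd A" and "psd B"
  shows "trace (mat_powr (A + B) q ** A)
           \<le> trace (mat_powr A (q + 1)) + trace (mat_powr B q ** A)"
proof -
  note q0 = assms(1) and q1 = assms(2) and pA = assms(3) and pB = assms(4)
  obtain UA a where oA: "orthogonal_matrix UA" and hA: "A = fc UA a (\<lambda>t. t)" and an: "\<And>i. 0 \<le> a$i"
    and mA: "\<And>q. mat_powr A q = fc UA a (\<lambda>t. t powr q)" using mat_powr_fc[OF pA] by blast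
  obtain UB b where oB: "orthogonal_matrix UB" and hB: "B = fc UB b (\<lambda>t. t)" and bn: "\<And>i. 0 \<le> b$i"
    and mB: "\<And>q. mat_powr B q = fc UB b (\<lambda>t. t powr q)" using mat_powr_fc[OF pB] by blast
  obtain UC c where oC: "orthogonal_matrix UC" and hC: "A + B = fc UC c (\<lambda>t. t)" and cn: "\<And>i. 0 \<le> c$i"
    and mC: "\<And>q. mat_powr (A + B) q = fc UC c (\<lambda>t. t powr q)" using mat_powr_fc[OF psd_add[OF pA pB]] by blast
  define gA where "gA = (\<lambda>k. column k UA \<bullet> (A *v column k UA))"
  define gB where "gB = (\<lambda>k. column k UB \<bullet> (A *v column k UB))"
  define gC where "gC = (\<lambda>k. column k UC \<bullet> (A *v column k UC))"
  have gAn: "0 \<le> gA k" for k using pA by (simp add: gA_def psd_def)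
  have gBn: "0 \<le> gB k" for k using pA by (simp add: gB_def psd_def)
  have gCn: "0 \<le> gC k" for k using pA by (simp add: gC_def psd_def)
  define PA where "PA = (\<Sum>k\<in>UNIV. a$k powr q * gA k)"
  define PB where "PB = (\<Sum>k\<in>UNIV. b$k powr q * gB k)"
  define PC where "PC = (\<Sum>k\<in>UNIV. c$k powr q * gC k)"
  have PAn: "0 \<le> PA" unfolding PA_def using gAn by (intro sum_nonneg mult_nonneg_nonneg) auto
  have PBn: "0 \<le> PB" unfolding PB_def using gBn by (intro sum_nonneg mult_nonneg_nonneg) auto
  have trC: "trace (mat_powr (A + B) q ** A) = PC" by (simp add: mC fc_trace PC_def gC_def)
  have trB: "trace (mat_powr B q ** A) = PB" by (simp add: mB fc_trace PB_def gB_def)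
  have trA: "trace (mat_powr A (q + 1)) = PA"
  proof -
    have "mat_powr A (q + 1) = fc UA a (\<lambda>t. t powr q * t)"
      unfolding mA
    proof (rule fc_cong)
      fix i
      have "a$i powr (q + 1) = a$i powr q * a$i powr 1" by (rule powr_add)
      then show "a$i powr (q + 1) = a$i powr q * a$i" using an[of i] by (simp add: powr_one)
    qed
    also have "\<dots> = fc UA a (\<lambda>t. t powr q) ** A" by (simp add: hA fc_mult[OF oA])
    finally have "mat_powr A (q + 1) = mat_powr A q ** A" by (simp add: mA)
    then show ?thesis by (simp add: mA fc_trace PA_def gA_def)
  qed
  define w where "w = (\<lambda>s::real. indicator {0<..} s * s powr (q-1))"
  define TA where "TA = (\<lambda>s. \<Sum>k\<in>UNIV. a$k/(a$k+s) * gA k)"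
  define TB where "TB = (\<lambda>s. \<Sum>k\<in>UNIV. b$k/(b$k+s) * gB k)"
  define TC where "TC = (\<lambda>s. \<Sum>k\<in>UNIV. c$k/(c$k+s) * gC k)"
  have IA: "(\<integral>\<^sup>+ s. ennreal (w s * TA s) \<partial>lborel) = KK q * ennreal PA"
    unfolding w_def TA_def PA_def using int_sum[of "\<lambda>k. a$k" gA q] an gAn by simp
  have IB: "(\<integral>\<^sup>+ s. ennreal (w s * TB s) \<partial>lborel) = KK q * ennreal PB"
    unfolding w_def TB_def PB_def using int_sum[of "\<lambda>k. b$k" gB q] bn gBn by simp
  have IC: "(\<integral>\<^sup>+ s. ennreal (w s * TC s) \<partial>lborel) = KK q * ennreal PC"
    unfolding w_def TC_def PC_def using int_sum[of "\<lambda>k. c$k" gC q] cn gCn by simp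
  have pt: "ennreal (w s * TC s) \<le> ennreal (w s * TA s) + ennreal (w s * TB s)" for s
  proof (cases "s > 0")
    case False then show ?thesis by (simp add: w_def indicator_def)
  next
    case True
    have "trace (fc UC c (\<lambda>t. t/(t+s)) ** A)
           \<le> trace (fc UA a (\<lambda>t. t/(t+s)) ** A) + trace (fc UB b (\<lambda>t. t/(t+s)) ** A)"
      by (rule per_s[OF oA oB oC hA hB hC an bn cn pA pB True])
    then have "TC s \<le> TA s + TB s"
      by (simp only: fc_trace TA_def TB_def TC_def gA_def gB_def gC_def)
    moreover have w0: "0 \<le> w s" using True by (simp add: w_def)
    ultimately have le: "w s * TC s \<le> w s * TA s + w s * TB s"
      by (metis distrib_left mult_left_mono)
    have tan: "0 \<le> TA s"
    proof -
      have "0 \<le> a$k/(a$k+s) * gA k" for k using an[of k] gAn[of k] True by simp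
      then show ?thesis unfolding TA_def by (rule sum_nonneg)
    qed
    have tbn: "0 \<le> TB s"
    proof -
      have "0 \<le> b$k/(b$k+s) * gB k" for k using bn[of k] gBn[of k] True by simp
      then show ?thesis unfolding TB_def by (rule sum_nonneg)
    qed
    have "ennreal (w s * TA s) + ennreal (w s * TB s) = ennreal (w s * TA s + w s * TB s)"
      by (rule ennreal_plus[symmetric]) (use w0 tan tbn in simp_all)
    then show ?thesis using le by (simp add: ennreal_leI)
  qed
  have "KK q * ennreal PC \<le> (\<integral>\<^sup>+ s. ennreal (w s * TA s) + ennreal (w s * TB s) \<partial>lborel)"
    unfolding IC[symmetric] by (intro nn_integral_mono pt)
  also have "\<dots> = KK q * ennreal PA + KK q * ennreal PB"
    unfolding IA[symmetric] IB[symmetric]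
    by (rule nn_integral_add; unfold w_def TA_def TB_def; measurable)
  also have "\<dots> = KK q * ennreal (PA + PB)"
    unfolding ennreal_plus[OF PAn PBn] by (rule distrib_left[symmetric])
  finally have ineq: "KK q * ennreal PC \<le> KK q * ennreal (PA + PB)" .
  have kt: "KK q \<noteq> top" using KK_fin[OF q0 q1] by simp
  have "ennreal PC \<le> ennreal (PA + PB)"
    using ineq ennreal_mult_le_mult_iff[OF KK_pos[OF q0 q1] kt] by blast
  moreover have "0 \<le> PA + PB" using PAn PBn by simp
  ultimately have "PC \<le> PA + PB" using ennreal_le_iff by blast
  then show ?thesis using trA trB trC by simp
qed


end
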